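(* Every finite graph is isomorphic to an induced subgraph of the commuting graph of some finite group. This group can be taken to be nilpotent of class $2$ and exponent $4$.
   Context: The commuting graph of a group $G$ has vertex set $G$, distinct $x,y$ adjacent iff $xy=yx$. *)

theory Defs
  imports "HOL-Algebra.Algebra"
begin

definition commuting_adj :: "('g, 'b) monoid_scheme \<Rightarrow> 'g \<Rightarrow> 'g \<Rightarrow> bool" where
  "commuting_adj G x y \<longleftrightarrow> x \<noteq> y \<and> x \<otimes>\<^bsub>G\<^esub> y = y \<otimes>\<^bsub>G\<^esub> x"

definition group_center :: "('g, 'b) monoid_scheme \<Rightarrow> 'g set" where
  "group_center G = {z \<in> carrier G. \<forall>x \<in> carrier G. z \<otimes>\<^bsub>G\<^esub> x = x \<otimes>\<^bsub>G\<^esub> z}"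

definition nilpotent_class_2 :: "('g, 'b) monoid_scheme \<Rightarrow> bool" where
  "nilpotent_class_2 G \<longleftrightarrow>
     derived G (carrier G) \<subseteq> group_center G \<and> derived G (carrier G) \<noteq> {\<one>\<^bsub>G\<^esub>}"

definition group_exponent :: "('g, 'b) monoid_scheme \<Rightarrow> nat" where
  "group_exponent G = (LEAST n. 0 < n \<and> (\<forall>x \<in> carrier G. x [^]\<^bsub>G\<^esub> n = \<one>\<^bsub>G\<^esub>))"

end

theory Submission
  imports Defs "HOL-Library.Nat_Bijection"
begin

definition sd :: "'x set \<Rightarrow> 'x set \<Rightarrow> 'x set" where
  "sd A B = (A - B) \<union> (B - A)"

lemma sd_mem[simp]: "x \<in> sd A B \<longleftrightarrow> (x \<in> A) \<noteq> (x \<in> B)"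
  unfolding sd_def by auto

definition bt :: "(nat \<Rightarrow> nat \<Rightarrow> bool) \<Rightarrow> nat set \<Rightarrow> nat set \<Rightarrow> (nat \<times> nat) set" where
  "bt Q A B = {(i,j). i \<in> A \<and> j \<in> B \<and> Q i j}"

lemma bt_mem[simp]: "(i,j) \<in> bt Q A B \<longleftrightarrow> i \<in> A \<and> j \<in> B \<and> Q i j"
  unfolding bt_def by auto

definition mulR :: "(nat \<Rightarrow> nat \<Rightarrow> bool) \<Rightarrow> nat set \<times> (nat \<times> nat) set
   \<Rightarrow> nat set \<times> (nat \<times> nat) set \<Rightarrow> nat set \<times> (nat \<times> nat) set" where
  "mulR Q a b = (sd (fst a) (fst b), sd (sd (snd a) (snd b)) (bt Q (fst a) (fst b)))"

definition invR :: "(nat \<Rightarrow> nat \<Rightarrow> bool) \<Rightarrow> nat set \<times> (nat \<times> nat) set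
   \<Rightarrow> nat set \<times> (nat \<times> nat) set" where
  "invR Q a = (fst a, sd (snd a) (bt Q (fst a) (fst a)))"

definition carrR :: "nat set \<Rightarrow> (nat set \<times> (nat \<times> nat) set) set" where
  "carrR K = {a. fst a \<subseteq> K \<and> snd a \<subseteq> K \<times> K}"

definition enc :: "nat set \<times> (nat \<times> nat) set \<Rightarrow> nat" where
  "enc a = prod_encode (set_encode (fst a), set_encode (prod_encode ` snd a))"

definition dec :: "nat \<Rightarrow> nat set \<times> (nat \<times> nat) set" where
  "dec n = (set_decode (fst (prod_decode n)), prod_decode ` set_decode (snd (prod_decode n)))"

definition grp :: "(nat \<Rightarrow> nat \<Rightarrow> bool) \<Rightarrow> nat set \<Rightarrow> nat monoid" where
  "grp Q K = \<lparr>carrier = enc ` carrR K, monoid.mult = (\<lambda>x y. enc (mulR Q (dec x) (dec y))),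
     monoid.one = enc ({}, {})\<rparr>"

lemma dec_enc:
  assumes "finite K" "a \<in> carrR K" shows "dec (enc a) = a"
proof -
  have f1: "finite (fst a)" using assms finite_subset unfolding carrR_def by blast
  have f2: "finite (snd a)" using assms finite_subset[of "snd a" "K \<times> K"] unfolding carrR_def by blast
  then have "finite (prod_encode ` snd a)" by simp
  then show ?thesis using f1 unfolding dec_def enc_def
    by (simp add: image_image prod.expand)
qed

lemma enc_inj:
  assumes "finite K" "a \<in> carrR K" "b \<in> carrR K"
  shows "enc a = enc b \<longleftrightarrow> a = b"
  by (metis assms dec_enc)

lemma mulR_closed: "a \<in> carrR K \<Longrightarrow> b \<in> carrR K \<Longrightarrow> mulR Q a b \<in> carrR K"
  unfolding carrR_def mulR_def by auto

lemma invR_closed: "a \<in> carrR K \<Longrightarrow> invR Q a \<in> carrR K"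
  unfolding carrR_def invR_def by auto

lemma one_closed: "({}, {}) \<in> carrR K"
  unfolding carrR_def by auto

lemma mulR_assoc: "mulR Q (mulR Q a b) c = mulR Q a (mulR Q b c)"
  unfolding mulR_def by (auto simp: prod_eq_iff set_eq_iff)

lemma mulR_one: "mulR Q ({},{}) a = a"
  unfolding mulR_def by (auto simp: prod_eq_iff set_eq_iff)

lemma invR_l: "mulR Q (invR Q a) a = ({},{})"
  unfolding mulR_def invR_def by (auto simp: prod_eq_iff set_eq_iff)

context
  fixes Q :: "nat \<Rightarrow> nat \<Rightarrow> bool" and K :: "nat set"
  assumes finK: "finite K"
begin

lemma carrG: "carrier (grp Q K) = enc ` carrR K"
  unfolding grp_def by simp

lemma mulG: "a \<in> carrR K \<Longrightarrow> b \<in> carrR K \<Longrightarrow>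
  enc a \<otimes>\<^bsub>grp Q K\<^esub> enc b = enc (mulR Q a b)"
  unfolding grp_def by (simp add: dec_enc[OF finK])

lemma oneG: "\<one>\<^bsub>grp Q K\<^esub> = enc ({},{})"
  unfolding grp_def by simp

lemma group_grp: "group (grp Q K)"
proof (rule groupI)
  fix x y assume "x \<in> carrier (grp Q K)" "y \<in> carrier (grp Q K)"
  then show "x \<otimes>\<^bsub>grp Q K\<^esub> y \<in> carrier (grp Q K)"
    by (auto simp: carrG mulG mulR_closed)
next
  show "\<one>\<^bsub>grp Q K\<^esub> \<in> carrier (grp Q K)" by (simp add: carrG oneG one_closed)
next
  fix x y z assume "x \<in> carrier (grp Q K)" "y \<in> carrier (grp Q K)" "z \<in> carrier (grp Q K)"
  then show "x \<otimes>\<^bsub>grp Q K\<^esub> y \<otimes>\<^bsub>grp Q K\<^esub> z = x \<otimes>\<^bsub>grp Q K\<^esub> (y \<otimes>\<^bsub>grp Q K\<^esub> z)"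
    by (auto simp: carrG mulG mulR_closed mulR_assoc)
next
  fix x assume "x \<in> carrier (grp Q K)"
  then show "\<one>\<^bsub>grp Q K\<^esub> \<otimes>\<^bsub>grp Q K\<^esub> x = x"
    by (auto simp: carrG mulG oneG one_closed mulR_one)
next
  fix x assume "x \<in> carrier (grp Q K)"
  then obtain a where a: "a \<in> carrR K" "x = enc a" by (auto simp: carrG)
  then show "\<exists>y\<in>carrier (grp Q K). y \<otimes>\<^bsub>grp Q K\<^esub> x = \<one>\<^bsub>grp Q K\<^esub>"
    by (intro bexI[of _ "enc (invR Q a)"]) (auto simp: carrG mulG oneG invR_closed invR_l)
qed

lemma invG: "a \<in> carrR K \<Longrightarrow> inv\<^bsub>grp Q K\<^esub> (enc a) = enc (invR Q a)"
  using group.inv_equality[OF group_grp, of "enc (invR Q a)" "enc a"]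
  by (simp add: carrG mulG oneG invR_closed invR_l)

end


primrec powR :: "(nat \<Rightarrow> nat \<Rightarrow> bool) \<Rightarrow> nat set \<times> (nat \<times> nat) set \<Rightarrow> nat
   \<Rightarrow> nat set \<times> (nat \<times> nat) set" where
  "powR Q a 0 = ({},{})"
| "powR Q a (Suc n) = mulR Q (powR Q a n) a"

lemma powR_closed: "a \<in> carrR K \<Longrightarrow> powR Q a n \<in> carrR K"
  by (induct n) (auto simp: one_closed mulR_closed)

lemma powR_4: "powR Q a 4 = ({},{})"
  by (simp add: eval_nat_numeral mulR_def prod_eq_iff set_eq_iff) blast

lemma commR: "mulR Q (mulR Q (mulR Q a b) (invR Q a)) (invR Q b)
   = ({}, sd (bt Q (fst a) (fst b)) (bt Q (fst b) (fst a)))"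
  unfolding mulR_def invR_def by (auto simp: prod_eq_iff set_eq_iff)

lemma centR: "mulR Q ({}, C) b = mulR Q b ({}, C)"
  unfolding mulR_def by (auto simp: prod_eq_iff set_eq_iff)

lemma commute_R: "mulR Q a b = mulR Q b a \<longleftrightarrow> bt Q (fst a) (fst b) = bt Q (fst b) (fst a)"
  unfolding mulR_def by (auto simp: prod_eq_iff set_eq_iff)

context
  fixes Q :: "nat \<Rightarrow> nat \<Rightarrow> bool" and K :: "nat set"
  assumes finK: "finite K"
begin

lemma powG: "a \<in> carrR K \<Longrightarrow> enc a [^]\<^bsub>grp Q K\<^esub> (n::nat) = enc (powR Q a n)"
  by (induct n) (auto simp: oneG[OF finK] mulG[OF finK] powR_closed)

lemma commG: "a \<in> carrR K \<Longrightarrow> b \<in> carrR K \<Longrightarrow>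
  enc a \<otimes>\<^bsub>grp Q K\<^esub> enc b \<otimes>\<^bsub>grp Q K\<^esub> inv\<^bsub>grp Q K\<^esub> (enc a) \<otimes>\<^bsub>grp Q K\<^esub> inv\<^bsub>grp Q K\<^esub> (enc b)
  = enc ({}, sd (bt Q (fst a) (fst b)) (bt Q (fst b) (fst a)))"
  by (simp add: invG[OF finK] mulG[OF finK] mulR_closed invR_closed commR)

definition Zs where "Zs = enc ` {a \<in> carrR K. fst a = {}}"

lemma Zs_sub: "subgroup Zs (grp Q K)"
proof
  show "Zs \<subseteq> carrier (grp Q K)" unfolding Zs_def carrG[OF finK] by auto
next
  fix x y assume "x \<in> Zs" "y \<in> Zs"
  then obtain a b where ab: "a \<in> carrR K" "fst a = {}" "x = enc a" "b \<in> carrR K" "fst b = {}" "y = enc b"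
    unfolding Zs_def by auto
  have "mulR Q a b \<in> {a \<in> carrR K. fst a = {}}" using ab by (simp add: mulR_closed) (simp add: mulR_def sd_def)
  then show "x \<otimes>\<^bsub>grp Q K\<^esub> y \<in> Zs" unfolding Zs_def
    using ab by (simp add: mulG[OF finK])
next
  show "\<one>\<^bsub>grp Q K\<^esub> \<in> Zs" unfolding Zs_def oneG[OF finK] using one_closed[of K] by auto
next
  fix x assume "x \<in> Zs"
  then obtain a where ab: "a \<in> carrR K" "fst a = {}" "x = enc a"
    unfolding Zs_def by auto
  have "invR Q a \<in> {a \<in> carrR K. fst a = {}}" using ab by (simp add: invR_closed) (simp add: invR_def)
  then show "inv\<^bsub>grp Q K\<^esub> x \<in> Zs" unfolding Zs_def
    using ab by (simp add: invG[OF finK])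
qed

lemma Zs_center: "Zs \<subseteq> group_center (grp Q K)"
  unfolding Zs_def group_center_def carrG[OF finK]
  by (auto simp: mulG[OF finK] one_closed)
     (metis centR prod.collapse)


lemma nil2:
  assumes pK: "p \<in> K" and qK: "q \<in> K" and pq: "Q p q" "\<not> Q q p"
  shows "nilpotent_class_2 (grp Q K)"
proof -
  interpret G: group "grp Q K" by (rule group_grp[OF finK])
  have ds: "derived_set (grp Q K) (carrier (grp Q K)) \<subseteq> Zs"
  proof clarify
    fix x y assume "x \<in> carrier (grp Q K)" "y \<in> carrier (grp Q K)"
    then obtain a b where ab: "a \<in> carrR K" "b \<in> carrR K" "x = enc a" "y = enc b"
      by (auto simp: carrG[OF finK])
    have "({}, sd (bt Q (fst a) (fst b)) (bt Q (fst b) (fst a))) \<in> {a \<in> carrR K. fst a = {}}"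
      using ab unfolding carrR_def by auto
    then show "x \<otimes>\<^bsub>grp Q K\<^esub> y \<otimes>\<^bsub>grp Q K\<^esub> inv\<^bsub>grp Q K\<^esub> x \<otimes>\<^bsub>grp Q K\<^esub> inv\<^bsub>grp Q K\<^esub> y \<in> Zs"
      unfolding Zs_def using ab by (simp add: commG)
  qed
  have d1: "derived (grp Q K) (carrier (grp Q K)) \<subseteq> group_center (grp Q K)"
    unfolding derived_def
    using G.generate_subgroup_incl[OF ds Zs_sub] Zs_center by blast
  let ?a = "({p}, {}) :: nat set \<times> (nat \<times> nat) set"
  let ?b = "({q}, {}) :: nat set \<times> (nat \<times> nat) set"
  have ac: "?a \<in> carrR K" "?b \<in> carrR K" using pK qK unfolding carrR_def by auto
  have pq': "p \<noteq> q" using pq by auto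
  have bt1: "sd (bt Q {p} {q}) (bt Q {q} {p}) = {(p,q)}" using pq pq' by (auto simp: set_eq_iff)
  let ?c = "enc ({}, {(p,q)})"
  have cc: "({}, {(p,q)}) \<in> carrR K" using pK qK unfolding carrR_def by auto
  have ceq: "?c = enc ?a \<otimes>\<^bsub>grp Q K\<^esub> enc ?b \<otimes>\<^bsub>grp Q K\<^esub> inv\<^bsub>grp Q K\<^esub> (enc ?a) \<otimes>\<^bsub>grp Q K\<^esub> inv\<^bsub>grp Q K\<^esub> (enc ?b)"
    using commG[OF ac] bt1 by simp
  have "enc ?a \<in> carrier (grp Q K)" "enc ?b \<in> carrier (grp Q K)"
    using ac by (auto simp: carrG[OF finK])
  then have "?c \<in> derived_set (grp Q K) (carrier (grp Q K))"
    using ceq by blast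
  then have "?c \<in> derived (grp Q K) (carrier (grp Q K))"
    unfolding derived_def by (rule generate.incl)
  moreover have "?c \<noteq> \<one>\<^bsub>grp Q K\<^esub>"
    using enc_inj[OF finK cc one_closed] by (simp add: oneG[OF finK])
  ultimately have "derived (grp Q K) (carrier (grp Q K)) \<noteq> {\<one>\<^bsub>grp Q K\<^esub>}" by blast
  then show ?thesis unfolding nilpotent_class_2_def using d1 by blast
qed

lemma exp4:
  assumes pK: "p \<in> K" and pp: "Q p p"
  shows "group_exponent (grp Q K) = 4"
  unfolding group_exponent_def
proof (rule Least_equality)
  show "0 < (4::nat) \<and> (\<forall>x\<in>carrier (grp Q K). x [^]\<^bsub>grp Q K\<^esub> (4::nat) = \<one>\<^bsub>grp Q K\<^esub>)"
    by (auto simp: carrG[OF finK] powG oneG[OF finK] powR_4)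
next
  fix y :: nat assume y: "0 < y \<and> (\<forall>x\<in>carrier (grp Q K). x [^]\<^bsub>grp Q K\<^esub> y = \<one>\<^bsub>grp Q K\<^esub>)"
  let ?a = "({p}, {}) :: nat set \<times> (nat \<times> nat) set"
  have ac: "?a \<in> carrR K" using pK unfolding carrR_def by auto
  then have "enc ?a \<in> carrier (grp Q K)" by (simp add: carrG[OF finK])
  with y have "enc ?a [^]\<^bsub>grp Q K\<^esub> y = \<one>\<^bsub>grp Q K\<^esub>" by blast
  then have e: "enc (powR Q ?a y) = enc ({},{})" by (simp add: powG[OF ac] oneG[OF finK])
  have "powR Q ?a y = ({},{})"
    using e enc_inj[OF finK powR_closed[OF ac] one_closed] by simp
  moreover have "powR Q ?a y \<noteq> ({},{})" if "y < 4"
  proof -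
    have "y = 1 \<or> y = 2 \<or> y = 3" using y that by auto
    moreover have "fst (powR Q ?a 1) = {p}" by (simp add: mulR_def sd_def)
    moreover have "(p,p) \<in> snd (powR Q ?a 2)" using pp by (simp add: eval_nat_numeral mulR_def)
    moreover have "fst (powR Q ?a 3) = {p}" by (simp add: eval_nat_numeral mulR_def sd_def)
    ultimately show ?thesis by auto
  qed
  ultimately show "4 \<le> y" by (meson not_le)
qed

end

lemma bt_single: "i \<noteq> j \<Longrightarrow> (bt Q {i} {j} = bt Q {j} {i}) \<longleftrightarrow> \<not> Q i j \<and> \<not> Q j i"
  by (auto simp: set_eq_iff)

theorem mainTheorem7:
  fixes V :: "'a set" and E :: "'a \<Rightarrow> 'a \<Rightarrow> bool"
  assumes "finite V"
    and "\<And>u v. E u v \<Longrightarrow> E v u"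
    and "\<And>u. \<not> E u u"
  shows "\<exists>G :: nat monoid. group G \<and> finite (carrier G)
           \<and> nilpotent_class_2 G \<and> group_exponent G = 4
           \<and> (\<exists>f. f ` V \<subseteq> carrier G \<and> inj_on f V
                 \<and> (\<forall>u \<in> V. \<forall>v \<in> V. E u v \<longleftrightarrow> commuting_adj G (f u) (f v)))"
proof -
  obtain \<iota> :: "'a \<Rightarrow> nat" and n where im: "\<iota> ` V = {i. i < n}" and inj: "inj_on \<iota> V"
    using finite_imp_inj_to_nat_seg[OF assms(1)] by blast
  define R where "R i j \<longleftrightarrow> (\<exists>u\<in>V. \<exists>v\<in>V. \<iota> u = i \<and> \<iota> v = j \<and> E u v)" for i j
  define Q where "Q i j \<longleftrightarrow> i = j \<or> (i < j \<and> \<not> R i j)" for i j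
  have Rsym: "R i j \<Longrightarrow> R j i" for i j using assms(2) unfolding R_def by blast
  define K where "K = {..<n+2}"
  have finK: "finite K" unfolding K_def by simp
  have nR: "\<not> R n (n+1)"
  proof
    assume "R n (n+1)"
    then obtain u where "u \<in> V" "\<iota> u = n" unfolding R_def by blast
    then have "n \<in> \<iota> ` V" by blast
    then show False using im by auto
  qed
  have Q1: "Q n (n+1)" "\<not> Q (n+1) n" using nR unfolding Q_def by auto
  define G where "G = grp Q K"
  have grp: "group G" unfolding G_def by (rule group_grp[OF finK])
  have fin: "finite (carrier G)"
  proof -
    have "carrR K \<subseteq> Pow K \<times> Pow (K \<times> K)" unfolding carrR_def by auto
    moreover have "finite (Pow K \<times> Pow (K \<times> K))" using finK by simp
    ultimately have "finite (carrR K)" by (rule finite_subset)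
    then show ?thesis unfolding G_def carrG[OF finK] by simp
  qed
  have nil: "nilpotent_class_2 G" unfolding G_def
    by (rule nil2[OF finK, of n "n+1"]) (use Q1 in \<open>auto simp: K_def\<close>)
  have ex: "group_exponent G = 4" unfolding G_def
    by (rule exp4[OF finK, of n]) (auto simp: K_def Q_def)
  define f where "f u = enc ({\<iota> u}, {})" for u
  have ac: "({\<iota> u}, {}) \<in> carrR K" if "u \<in> V" for u
  proof -
    have "\<iota> u \<in> \<iota> ` V" using that by blast
    then have "\<iota> u < n" using im by auto
    then show ?thesis unfolding carrR_def K_def by auto
  qed
  have fc: "f ` V \<subseteq> carrier G" unfolding G_def carrG[OF finK] f_def using ac by auto
  have finj: "f u = f v \<longleftrightarrow> u = v" if "u \<in> V" "v \<in> V" for u v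
    unfolding f_def using enc_inj[OF finK ac[OF that(1)] ac[OF that(2)]] inj that
    by (auto dest: inj_onD)
  have fi: "inj_on f V" using finj by (auto intro: inj_onI)
  have adj: "E u v \<longleftrightarrow> commuting_adj G (f u) (f v)" if uv: "u \<in> V" "v \<in> V" for u v
  proof (cases "u = v")
    case True
    then show ?thesis using assms(3) unfolding commuting_adj_def by simp
  next
    case False
    then have ij: "\<iota> u \<noteq> \<iota> v" using inj uv by (auto dest: inj_onD)
    have "f u \<otimes>\<^bsub>G\<^esub> f v = f v \<otimes>\<^bsub>G\<^esub> f u \<longleftrightarrow>
          mulR Q ({\<iota> u}, {}) ({\<iota> v}, {}) = mulR Q ({\<iota> v}, {}) ({\<iota> u}, {})"
      unfolding G_def f_def mulG[OF finK ac[OF uv(1)] ac[OF uv(2)]] mulG[OF finK ac[OF uv(2)] ac[OF uv(1)]]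
      by (rule enc_inj[OF finK mulR_closed[OF ac[OF uv(1)] ac[OF uv(2)]] mulR_closed[OF ac[OF uv(2)] ac[OF uv(1)]]])
    also have "\<dots> \<longleftrightarrow> \<not> Q (\<iota> u) (\<iota> v) \<and> \<not> Q (\<iota> v) (\<iota> u)"
      by (simp add: commute_R bt_single[OF ij])
    also have "\<dots> \<longleftrightarrow> R (\<iota> u) (\<iota> v) \<and> R (\<iota> v) (\<iota> u)"
      unfolding Q_def using ij Rsym by auto
    also have "\<dots> \<longleftrightarrow> E u v"
      unfolding R_def using uv inj assms(2) by (auto dest: inj_onD) blast
    finally show ?thesis unfolding commuting_adj_def using finj[OF uv] False by auto
  qed
  show ?thesis
    by (rule exI[of _ G]) (use grp fin nil ex fc fi adj in blast)
qed
end
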